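(* The graph $G$ defined below is countable, connected and arc transitive, and it has infinite motion.
   Context: Let $\mathbb Q^+=\{q^+: q\in\mathbb Q\}$ and $\mathbb Q^-=\{q^-: q\in\mathbb Q\}$ be two disjoint copies of $\mathbb Q$. $G$ is the simple undirected graph with vertex set $V=\mathbb Q^+\cup\mathbb Q^-$ in which the edges are exactly the pairs $\{q^+,r^-\}$ with $q,r\in\mathbb Q$ and $q<r$ (there are no edges inside $\mathbb Q^+$ or inside $\mathbb Q^-$). A graph is arc transitive if its automorphism group acts transitively on ordered pairs $(u,v)$ of adjacent vertices. A graph has infinite motion if every non-identity automorphism moves infinitely many vertices. *)

theory Defs
  imports Main "HOL-Library.Countable_Set"
begin

text \<open>Simple undirected graphs on a type 'a, given by a symmetric irreflexive
  adjacency relation E; the vertex set is the whole type.\<close>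

definition graph_automorphism :: "('a \<Rightarrow> 'a \<Rightarrow> bool) \<Rightarrow> ('a \<Rightarrow> 'a) \<Rightarrow> bool" where
  "graph_automorphism E f \<longleftrightarrow> bij f \<and> (\<forall>u v. E u v \<longleftrightarrow> E (f u) (f v))"

definition graph_connected :: "('a \<Rightarrow> 'a \<Rightarrow> bool) \<Rightarrow> bool" where
  "graph_connected E \<longleftrightarrow> (\<forall>u v. (u, v) \<in> {(x, y). E x y}\<^sup>*)"

definition arc_transitive :: "('a \<Rightarrow> 'a \<Rightarrow> bool) \<Rightarrow> bool" where
  "arc_transitive E \<longleftrightarrow>
     (\<forall>u v x y. E u v \<longrightarrow> E x y \<longrightarrow>
        (\<exists>f. graph_automorphism E f \<and> f u = x \<and> f v = y))"

definition infinite_motion :: "('a \<Rightarrow> 'a \<Rightarrow> bool) \<Rightarrow> bool" where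
  "infinite_motion E \<longleftrightarrow>
     (\<forall>f. graph_automorphism E f \<and> f \<noteq> id \<longrightarrow> infinite {v. f v \<noteq> v})"

text \<open>The graph G: Inl q stands for q^+, Inr r for r^-; edges {q^+, r^-} with q < r.\<close>
definition G_adj :: "rat + rat \<Rightarrow> rat + rat \<Rightarrow> bool" where
  "G_adj u v \<longleftrightarrow>
     (\<exists>q r. q < r \<and> ((u = Inl q \<and> v = Inr r) \<or> (u = Inr r \<and> v = Inl q)))"

end

theory Submission
  imports Defs
begin

lemma adj_simps[simp]:
  "G_adj (Inl q) (Inr r) \<longleftrightarrow> q < r"
  "G_adj (Inr r) (Inl q) \<longleftrightarrow> q < r"
  "\<not> G_adj (Inl q) (Inl q')"
  "\<not> G_adj (Inr r) (Inr r')"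
  by (auto simp: G_adj_def)

lemma inf_img_Inr: "infinite S \<Longrightarrow> infinite (Inr ` S :: ('a + 'b) set)"
  using finite_imageD inj_Inr by (metis inj_on_subset subset_UNIV)
lemma inf_img_Inl: "infinite S \<Longrightarrow> infinite (Inl ` S :: ('a + 'b) set)"
  using finite_imageD inj_Inl by (metis inj_on_subset subset_UNIV)

lemma nbr_diff_inf:
  assumes "v \<noteq> w"
  shows "infinite {x. G_adj v x \<noteq> G_adj w x}"
proof (cases v)
  case (Inl q)
  show ?thesis
  proof (cases w)
    case (Inl q')
    with \<open>v = Inl q\<close> assms have "q \<noteq> q'" by auto
    then show ?thesis
    proof (cases "q < q'")
      case True
      have "Inr ` {q<..<q'} \<subseteq> {x. G_adj v x \<noteq> G_adj w x}"
        using \<open>v = Inl q\<close> \<open>w = Inl q'\<close> by auto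
      moreover have "infinite (Inr ` {q<..<q'} :: (rat+rat) set)"
        using True by (intro inf_img_Inr) simp
      ultimately show ?thesis using finite_subset by blast
    next
      case False
      hence "q' < q" using \<open>q \<noteq> q'\<close> by simp
      have "Inr ` {q'<..<q} \<subseteq> {x. G_adj v x \<noteq> G_adj w x}"
        using \<open>v = Inl q\<close> \<open>w = Inl q'\<close> by auto
      moreover have "infinite (Inr ` {q'<..<q} :: (rat+rat) set)"
        using \<open>q' < q\<close> by (intro inf_img_Inr) simp
      ultimately show ?thesis using finite_subset by blast
    qed
  next
    case (Inr r)
    have "Inr ` {q<..} \<subseteq> {x. G_adj v x \<noteq> G_adj w x}"
      using \<open>v = Inl q\<close> \<open>w = Inr r\<close> by auto
    moreover have "infinite (Inr ` {q<..} :: (rat+rat) set)"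
      by (intro inf_img_Inr infinite_Ioi)
    ultimately show ?thesis using finite_subset by blast
  qed
next
  case (Inr r)
  show ?thesis
  proof (cases w)
    case (Inr r')
    with \<open>v = Inr r\<close> assms have "r \<noteq> r'" by auto
    then show ?thesis
    proof (cases "r < r'")
      case True
      have "Inl ` {r<..<r'} \<subseteq> {x. G_adj v x \<noteq> G_adj w x}"
        using \<open>v = Inr r\<close> \<open>w = Inr r'\<close> by auto
      moreover have "infinite (Inl ` {r<..<r'} :: (rat+rat) set)"
        using True by (intro inf_img_Inl) simp
      ultimately show ?thesis using finite_subset by blast
    next
      case False
      hence "r' < r" using \<open>r \<noteq> r'\<close> by simp
      have "Inl ` {r'<..<r} \<subseteq> {x. G_adj v x \<noteq> G_adj w x}"
        using \<open>v = Inr r\<close> \<open>w = Inr r'\<close> by auto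
      moreover have "infinite (Inl ` {r'<..<r} :: (rat+rat) set)"
        using \<open>r' < r\<close> by (intro inf_img_Inl) simp
      ultimately show ?thesis using finite_subset by blast
    qed
  next
    case (Inl q)
    have "Inr ` {q<..} \<subseteq> {x. G_adj v x \<noteq> G_adj w x}"
      using \<open>v = Inr r\<close> \<open>w = Inl q\<close> by auto
    moreover have "infinite (Inr ` {q<..} :: (rat+rat) set)"
      by (intro inf_img_Inr infinite_Ioi)
    ultimately show ?thesis using finite_subset by blast
  qed
qed

lemma motion: "infinite_motion G_adj"
  unfolding infinite_motion_def
proof (intro allI impI)
  fix f assume a: "graph_automorphism G_adj f \<and> f \<noteq> id"
  then obtain v where v: "f v \<noteq> v" by (metis eq_id_iff)
  have "{x. G_adj v x \<noteq> G_adj (f v) x} \<subseteq> {x. f x \<noteq> x}"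
  proof
    fix x assume x: "x \<in> {x. G_adj v x \<noteq> G_adj (f v) x}"
    show "x \<in> {x. f x \<noteq> x}"
    proof (rule ccontr)
      assume "x \<notin> {x. f x \<noteq> x}"
      hence "f x = x" by simp
      with a have "G_adj v x = G_adj (f v) x" unfolding graph_automorphism_def by metis
      with x show False by simp
    qed
  qed
  moreover have "infinite {x. G_adj v x \<noteq> G_adj (f v) x}"
    using v by (intro nbr_diff_inf) auto
  ultimately show "infinite {v. f v \<noteq> v}" using finite_subset by blast
qed

lemma conn: "graph_connected G_adj"
proof -
  let ?R = "{(x, y). G_adj x y}"
  have sym: "(u, v) \<in> ?R\<^sup>* \<Longrightarrow> (v, u) \<in> ?R\<^sup>*" for u v
  proof -
    have "sym ?R" by (auto simp: sym_def G_adj_def)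
    moreover assume "(u, v) \<in> ?R\<^sup>*"
    ultimately show ?thesis by (meson sym_rtrancl symD)
  qed
  have ll: "(Inl a, Inl b) \<in> ?R\<^sup>*" for a b :: rat
  proof -
    have "(Inl a, Inr (max a b + 1)) \<in> ?R" by simp
    moreover have "(Inr (max a b + 1), Inl b) \<in> ?R" by simp
    ultimately show ?thesis by (meson converse_rtrancl_into_rtrancl r_into_rtrancl)
  qed
  have toL: "\<exists>a. (u, Inl a) \<in> ?R\<^sup>*" for u :: "rat + rat"
  proof (cases u)
    case (Inl a) then show ?thesis by blast
  next
    case (Inr r)
    have "(Inr r, Inl (r - 1)) \<in> ?R" by simp
    then show ?thesis using Inr by blast
  qed
  show ?thesis unfolding graph_connected_def
  proof (intro allI)
    fix u v :: "rat + rat"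
    obtain a where a: "(u, Inl a) \<in> ?R\<^sup>*" using toL by blast
    obtain b where b: "(v, Inl b) \<in> ?R\<^sup>*" using toL by blast
    show "(u, v) \<in> ?R\<^sup>*" using a ll[of a b] sym[OF b] by (meson rtrancl_trans)
  qed
qed

definition aff :: "rat \<Rightarrow> rat \<Rightarrow> rat \<Rightarrow> rat" where "aff a b t = a * t + b"

lemma aut1:
  assumes "a > 0"
  shows "graph_automorphism G_adj (map_sum (aff a b) (aff a b))"
proof -
  define c where "c = - b / a"
  let ?g = "map_sum (aff (1/a) c) (aff (1/a) c)"
  have i1: "aff (1/a) c (aff a b t) = t" for t
    using assms by (simp add: aff_def c_def field_simps)
  have i2: "aff a b (aff (1/a) c t) = t" for t
    using assms by (simp add: aff_def c_def field_simps)
  have "bij (map_sum (aff a b) (aff a b))"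
    apply (rule o_bij[of ?g])
     apply (rule ext, case_tac x, simp_all add: i1 i2)
    apply (rule ext, case_tac x, simp_all add: i1 i2)
    done
  moreover have "aff a b q < aff a b r \<longleftrightarrow> q < r" for q r
    using assms by (simp add: aff_def)
  ultimately show ?thesis unfolding graph_automorphism_def
    apply (simp)
    apply (intro allI, case_tac u; case_tac v) by simp_all
qed

definition flip :: "(rat \<Rightarrow> rat) \<Rightarrow> rat + rat \<Rightarrow> rat + rat" where
  "flip h = case_sum (\<lambda>t. Inr (- h t)) (\<lambda>t. Inl (- h t))"

lemma aut2:
  assumes "a > 0"
  shows "graph_automorphism G_adj (flip (aff a b))"
proof -
  define c where "c = - b / a"
  let ?h = "\<lambda>t. aff (1/a) c (- t)"
  let ?g = "case_sum (\<lambda>t. Inr (?h t)) (\<lambda>t. Inl (?h t))"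
  have i1: "aff (1/a) c (aff a b t) = t" for t
    using assms by (simp add: aff_def c_def field_simps)
  have i2: "- aff a b (aff (1/a) c (- t)) = t" for t
    using assms by (simp add: aff_def c_def field_simps)
  have "bij (flip (aff a b))"
    apply (rule o_bij[of ?g])
    by (auto simp: fun_eq_iff i1 i2 flip_def split: sum.splits)
  moreover have "aff a b q < aff a b r \<longleftrightarrow> q < r" for q r
    using assms by (simp add: aff_def)
  ultimately show ?thesis unfolding graph_automorphism_def
    apply (simp)
    apply (intro allI, case_tac u; case_tac v) by (simp_all add: flip_def)
qed

lemma A:
  assumes "q < r" "q' < r'"
  shows "\<exists>f. graph_automorphism G_adj f \<and> f (Inl q) = Inl q' \<and> f (Inr r) = Inr r'"
proof -
  define a where "a = (r' - q') / (r - q)"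
  define b where "b = q' - a * q"
  have "a > 0" using assms by (simp add: a_def)
  moreover have "aff a b q = q'" by (simp add: aff_def b_def)
  moreover have "aff a b r = r'"
  proof -
    have "a * (r - q) = r' - q'" using assms by (simp add: a_def)
    hence "a * r - a * q = r' - q'" by (simp add: right_diff_distrib)
    thus ?thesis by (simp add: aff_def b_def)
  qed
  ultimately show ?thesis using aut1 by (intro exI[of _ "map_sum (aff a b) (aff a b)"]) auto
qed

lemma B:
  assumes "q < r" "q' < r'"
  shows "\<exists>f. graph_automorphism G_adj f \<and> f (Inl q) = Inr r' \<and> f (Inr r) = Inl q'"
proof -
  define a where "a = (r' - q') / (r - q)"
  define b where "b = - r' - a * q"
  have "a > 0" using assms by (simp add: a_def)
  moreover have "- aff a b q = r'" by (simp add: aff_def b_def)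
  moreover have "- aff a b r = q'"
  proof -
    have "a * (r - q) = r' - q'" using assms by (simp add: a_def)
    hence "a * r - a * q = r' - q'" by (simp add: right_diff_distrib)
    thus ?thesis by (simp add: aff_def b_def)
  qed
  ultimately show ?thesis using aut2 by (intro exI[of _ "flip (aff a b)"]) (auto simp: flip_def)
qed

lemma arc: "arc_transitive G_adj"
  unfolding arc_transitive_def
proof (intro allI impI)
  fix u v x y assume uv: "G_adj u v" and xy: "G_adj x y"
  from uv obtain q r where qr: "q < r" "(u = Inl q \<and> v = Inr r) \<or> (u = Inr r \<and> v = Inl q)"
    unfolding G_adj_def by blast
  from xy obtain q' r' where qr': "q' < r'" "(x = Inl q' \<and> y = Inr r') \<or> (x = Inr r' \<and> y = Inl q')"
    unfolding G_adj_def by blast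
  show "\<exists>f. graph_automorphism G_adj f \<and> f u = x \<and> f v = y"
    using qr qr' A[OF qr(1) qr'(1)] B[OF qr(1) qr'(1)] by auto
qed

theorem mainTheorem3:
  shows "countable (UNIV :: (rat + rat) set) \<and> graph_connected G_adj \<and>
         arc_transitive G_adj \<and> infinite_motion G_adj"
  using conn arc motion by simp

end
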